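(* For all positive integers $m$ and $n$, $$\sum_{k=1}^nH_k\sum_{j=m}^{n-k+1}\binom{n-k}{j-1}\frac{s(j,m)}{j!}=\frac{1}{m!}H_{n+1}(m+1).$$ In particular, $\sum_{k=1}^n\frac{H_k}{n-k+1}=H_{n+1}^2-H_{n+1}^{(2)}$.
   Context: For integers $m\ge 1$, $n\ge 0$, the multiple harmonic-like numbers are $H_n(m)=\sum_{1\le k_1+k_2+\cdots+k_m\le n}\frac{1}{k_1k_2\cdots k_m}$ (sum over positive integers $k_1,\dots,k_m$), with $H_n(0)=1$ for $n\ge 0$ and $H_0(m)=0$ for $m\ge1$. $H_n=\sum_{k=1}^n\frac1k$, $H_n^{(2)}=\sum_{k=1}^n\frac1{k^2}$. The (signed) Stirling numbers of the first kind $s(n,k)$ are defined by $\sum_{n\ge k}s(n,k)\frac{z^n}{n!}=\frac{\ln^k(1+z)}{k!}$, with $s(n,k)=0$ for $n<k$. *)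

theory Defs
  imports "HOL-Analysis.Analysis" "HOL-Combinatorics.Stirling"
begin

definition stirling1s :: "nat \<Rightarrow> nat \<Rightarrow> real" where
  "stirling1s n k = (-1) ^ (n - k) * real (stirling n k)"

text \<open>Multiple harmonic-like numbers H_n(m): sum over (k_1..k_m) positive integers
  with k_1+...+k_m \<le> n of 1/(k_1...k_m). Tuples are functions on {..<m} (extensional).\<close>
definition mharm :: "nat \<Rightarrow> nat \<Rightarrow> real" where
  "mharm n m = (\<Sum>k\<in>{k \<in> {..<m} \<rightarrow>\<^sub>E {1..n}. (\<Sum>i<m. k i) \<le> n}.
                   1 / (\<Prod>i<m. real (k i)))"

definition harm2 :: "nat \<Rightarrow> real" where
  "harm2 n = (\<Sum>k=1..n. 1 / (real k)^2)"

end

theory Submission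
  imports Defs
begin


definition A :: "nat \<Rightarrow> nat \<Rightarrow> real" where "A p M = real (stirling p M) / fact p"

lemma A_rec: "real (Suc q) * A (Suc q) (Suc M) = real q * A q (Suc M) + A q M"
proof -
  have f: "fact (Suc q) = real (Suc q) * (fact q :: real)" by (simp only: fact_Suc of_nat_Suc)
  have "real (stirling (Suc q) (Suc M)) = real q * real (stirling q (Suc M)) + real (stirling q M)"
    by (simp only: stirling.simps of_nat_add of_nat_mult)
  thus ?thesis unfolding A_def f by (simp add: field_simps del: of_nat_Suc)
qed

lemma A_0_Suc [simp]: "A 0 (Suc M) = 0" by (simp add: A_def)
lemma A_0: "A q 0 = (if q = 0 then 1 else 0)" by (cases q) (auto simp: A_def)
lemma A_1: "q \<ge> 1 \<Longrightarrow> A q 1 = 1 / real q"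
proof -
  assume "q \<ge> 1" then obtain r where q: "q = Suc r" by (cases q) auto
  have "A (Suc r) 1 = fact r / fact (Suc r)" by (simp only: A_def One_nat_def stirling_Suc_n_1 of_nat_fact)
  also have "\<dots> = 1 / real (Suc r)" by (simp only: fact_Suc) (simp add: field_simps del: of_nat_Suc)
  finally show ?thesis unfolding q .
qed

definition S :: "nat \<Rightarrow> nat \<Rightarrow> real" where "S q M = (\<Sum>a=1..q. A (q-a) M / real a)"

lemma telesc: "(\<Sum>a=1..p. f (Suc (p-a)) - f (p-a)) = f p - (f 0 :: real)"
proof -
  have "(\<Sum>a=1..p. f (Suc (p-a)) - f (p-a)) = (\<Sum>a=1..p. f (Suc (p-(p + 1 - a))) - f (p-(p+1-a)))"
    by (subst sum.atLeastAtMost_rev) simp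
  also have "\<dots> = (\<Sum>a=1..p. f a - f (a - 1))"
    by (rule sum.cong) (auto simp: Suc_diff_le)
  also have "\<dots> = f p - f 0" by (induction p) (auto simp: sum.cl_ivl_Suc)
  finally show ?thesis .
qed

lemma S_step: "real (Suc p) * S (Suc p) (Suc M) = real p * S p (Suc M) + S p M + A p (Suc M)"
proof -
  have "S (Suc p) (Suc M) = (\<Sum>a=1..p. A (Suc (p-a)) (Suc M) / real a)"
    unfolding S_def by (simp add: sum.cl_ivl_Suc Suc_diff_le)
  hence "real (Suc p) * S (Suc p) (Suc M) = (\<Sum>a=1..p. real (Suc p) * A (Suc (p-a)) (Suc M) / real a)"
    by (simp add: sum_distrib_left)
  also have "\<dots> = (\<Sum>a=1..p. real p * (A (p-a) (Suc M) / real a) + A (p-a) M / real a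
       + (A (Suc (p-a)) (Suc M) - A (p-a) (Suc M)))"
  proof (rule sum.cong)
    fix a assume a: "a \<in> {1..p}"
    have e: "real p = real (p-a) + real a" "real (Suc p) = real (Suc (p-a)) + real a" using a by auto
    have r: "real (Suc (p-a)) * A (Suc (p-a)) (Suc M) = real (p-a) * A (p-a) (Suc M) + A (p-a) M"
      by (rule A_rec)
    have "real a > 0" using a by auto
    thus "real (Suc p) * A (Suc (p-a)) (Suc M) / real a = real p * (A (p-a) (Suc M) / real a) + A (p-a) M / real a
       + (A (Suc (p-a)) (Suc M) - A (p-a) (Suc M))"
      unfolding e using r by (simp add: field_simps)
  qed simp
  also have "\<dots> = real p * S p (Suc M) + S p M + (A p (Suc M) - A 0 (Suc M))"
    unfolding S_def sum.distrib sum_distrib_left[symmetric]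
    by (subst telesc) simp
  finally show ?thesis by simp
qed

lemma conv: "S q M = real (Suc M) * A q (Suc M)"
proof (induction M arbitrary: q)
  case 0
  show ?case
  proof (cases "q = 0")
    case True thus ?thesis by (simp add: S_def)
  next
    case False
    have "S q 0 = (\<Sum>a\<in>{1..q}. if a = q then 1 / real a else 0)"
      unfolding S_def by (rule sum.cong) (auto simp: A_0)
    also have "\<dots> = 1 / real q" using False by (subst sum.delta) auto
    finally show ?thesis using False A_1[of q] by simp
  qed
next
  case (Suc M)
  show ?case
  proof (induction q)
    case 0 thus ?case by (simp add: S_def)
  next
    case (Suc p)
    have "real (Suc p) * S (Suc p) (Suc M) = real p * S p (Suc M) + S p M + A p (Suc M)" by (rule S_step)
    also have "\<dots> = real (Suc (Suc M)) * (real p * A p (Suc (Suc M)) + A p (Suc M))"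
      using Suc.IH Suc.prems \<open>\<And>q. S q M = _\<close> by (simp add: algebra_simps)
    also have "\<dots> = real (Suc (Suc M)) * (real (Suc p) * A (Suc p) (Suc (Suc M)))"
      by (simp only: A_rec)
    finally show ?case by (simp del: of_nat_Suc)
  qed
qed




definition MS :: "nat \<Rightarrow> nat \<Rightarrow> (nat \<Rightarrow> nat) set" where
  "MS N m = {k \<in> {..<m} \<rightarrow>\<^sub>E {1..N}. (\<Sum>i<m. k i) \<le> N}"

lemma mharm_MS: "mharm N m = (\<Sum>k\<in>MS N m. 1 / (\<Prod>i<m. real (k i)))"
  by (simp add: mharm_def MS_def)

lemma finite_MS: "finite (MS N m)"
  unfolding MS_def by (rule finite_subset[of _ "{..<m} \<rightarrow>\<^sub>E {1..N}"]) (auto intro: finite_PiE)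

lemma mharm_0: "mharm N 0 = 1"
  by (simp add: mharm_def)

lemma bij_MS: "bij_betw (\<lambda>(a,g). g(m:=a)) (SIGMA a:{1..N}. MS (N-a) m) (MS N (Suc m))"
proof (rule bij_betw_imageI)
  show "inj_on (\<lambda>(a,g). g(m:=a)) (SIGMA a:{1..N}. MS (N-a) m)"
  proof (rule inj_onI, clarify)
    fix a g a' g'
    assume g: "g \<in> MS (N-a) m" and g': "g' \<in> MS (N-a') m" and e: "g(m:=a) = g'(m:=a')"
    have "a = a'" using fun_cong[OF e, of m] by simp
    moreover have "g = g'"
    proof
      fix i show "g i = g' i"
      proof (cases "i = m")
        case True thus ?thesis using g g' by (auto simp: MS_def PiE_def extensional_def)
      next
        case False thus ?thesis using fun_cong[OF e, of i] by simp
      qed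
    qed
    ultimately show "a = a' \<and> g = g'" by simp
  qed
  show "(\<lambda>(a,g). g(m:=a)) ` (SIGMA a:{1..N}. MS (N-a) m) = MS N (Suc m)"
  proof
    show "(\<lambda>(a,g). g(m:=a)) ` (SIGMA a:{1..N}. MS (N-a) m) \<subseteq> MS N (Suc m)"
    proof clarify
      fix a g assume a: "a \<in> {1..N}" and g: "g \<in> MS (N-a) m"
      have gP: "g \<in> {..<m} \<rightarrow>\<^sub>E {1..N-a}" using g by (simp add: MS_def)
      have s0: "(\<Sum>i<m. (g(m:=a)) i) = (\<Sum>i<m. g i)" by (rule sum.cong) auto
      have s: "(\<Sum>i<Suc m. (g(m:=a)) i) = (\<Sum>i<m. g i) + a"
        by (simp only: sum.lessThan_Suc s0) simp
      have "(\<Sum>i<m. g i) \<le> N - a" using g by (simp add: MS_def)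
      hence le: "(\<Sum>i<Suc m. (g(m:=a)) i) \<le> N" using a unfolding s by auto
      have "g(m:=a) \<in> {..<Suc m} \<rightarrow>\<^sub>E {1..N}"
      proof (rule PiE_I)
        fix x assume "x \<in> {..<Suc m}"
        hence "x = m \<or> x < m" by auto
        thus "(g(m:=a)) x \<in> {1..N}"
        proof
          assume "x < m"
          hence "g x \<in> {1..N-a}" using gP by (intro PiE_mem[OF gP]) simp
          thus ?thesis using \<open>x < m\<close> by auto
        qed (use a in auto)
      next
        fix x assume "x \<notin> {..<Suc m}"
        thus "(g(m:=a)) x = undefined" using PiE_arb[OF gP, of x] by simp
      qed
      thus "g(m:=a) \<in> MS N (Suc m)" using le unfolding MS_def by (intro CollectI conjI)
    qed
    show "MS N (Suc m) \<subseteq> (\<lambda>(a,g). g(m:=a)) ` (SIGMA a:{1..N}. MS (N-a) m)"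
    proof
      fix k assume k: "k \<in> MS N (Suc m)"
      have s: "(\<Sum>i<Suc m. k i) = (\<Sum>i<m. k i) + k m" by (simp add: sum.lessThan_Suc)
      have le: "(\<Sum>i<m. k i) + k m \<le> N" using k s by (simp add: MS_def)
      have kP: "k \<in> {..<Suc m} \<rightarrow>\<^sub>E {1..N}" using k by (simp add: MS_def)
      have km: "k m \<in> {1..N}" by (rule PiE_mem[OF kP]) simp
      have "\<And>i. i < m \<Longrightarrow> k i \<le> (\<Sum>i<m. k i)"
        by (rule member_le_sum) auto
      hence kle: "\<And>i. i < m \<Longrightarrow> k i \<le> N - k m" using le by fastforce
      have "k(m:=undefined) \<in> {..<m} \<rightarrow>\<^sub>E {1..N - k m}"
      proof (rule PiE_I)
        fix x assume x: "x \<in> {..<m}"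
        hence "k x \<in> {1..N}" by (intro PiE_mem[OF kP]) simp
        hence "k x \<ge> 1" by simp
        thus "(k(m:=undefined)) x \<in> {1..N - k m}" using x kle by auto
      next
        fix x assume "x \<notin> {..<m}"
        thus "(k(m:=undefined)) x = undefined" using PiE_arb[OF kP, of x] by simp
      qed
      moreover have "(\<Sum>i<m. (k(m:=undefined)) i) = (\<Sum>i<m. k i)" by (rule sum.cong) auto
      hence "(\<Sum>i<m. (k(m:=undefined)) i) \<le> N - k m" using le by simp
      ultimately have "k(m:=undefined) \<in> MS (N - k m) m" unfolding MS_def by (intro CollectI conjI)
      moreover have "k = (k(m:=undefined))(m := k m)" by simp
      ultimately show "k \<in> (\<lambda>(a,g). g(m:=a)) ` (SIGMA a:{1..N}. MS (N-a) m)"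
        using km by (intro image_eqI[of _ _ "(k m, k(m:=undefined))"]) auto
    qed
  qed
qed

lemma mharm_Suc: "mharm N (Suc m) = (\<Sum>a=1..N. mharm (N-a) m / real a)"
proof -
  have "mharm N (Suc m) = (\<Sum>x\<in>(SIGMA a:{1..N}. MS (N-a) m). 1 / (\<Prod>i<Suc m. real (((\<lambda>(a,g). g(m:=a)) x) i)))"
    unfolding mharm_MS by (rule sum.reindex_bij_betw[OF bij_MS, symmetric])
  also have "\<dots> = (\<Sum>(a,g)\<in>(SIGMA a:{1..N}. MS (N-a) m). 1 / (\<Prod>i<Suc m. real ((g(m:=a)) i)))"
    by (rule sum.cong) auto
  also have "\<dots> = (\<Sum>a=1..N. \<Sum>g\<in>MS (N-a) m. 1 / (\<Prod>i<Suc m. real ((g(m:=a)) i)))"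
    by (rule sum.Sigma[symmetric]) (auto simp: finite_MS)
  also have "\<dots> = (\<Sum>a=1..N. mharm (N-a) m / real a)"
  proof (rule sum.cong[OF refl])
    fix a
    have "(\<Sum>g\<in>MS (N-a) m. 1 / (\<Prod>i<Suc m. real ((g(m:=a)) i)))
         = (\<Sum>g\<in>MS (N-a) m. (1 / (\<Prod>i<m. real (g i))) / real a)"
    proof (rule sum.cong[OF refl])
      fix g
      have "(\<Prod>i<Suc m. real ((g(m:=a)) i)) = (\<Prod>i<m. real (g i)) * real a"
        by (simp add: prod.lessThan_Suc)
      thus "1 / (\<Prod>i<Suc m. real ((g(m:=a)) i)) = (1 / (\<Prod>i<m. real (g i))) / real a" by simp
    qed
    thus "(\<Sum>g\<in>MS (N-a) m. 1 / (\<Prod>i<Suc m. real ((g(m:=a)) i))) = mharm (N-a) m / real a"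
      by (simp add: mharm_MS sum_divide_distrib)
  qed
  finally show ?thesis .
qed




definition l :: "nat \<Rightarrow> nat \<Rightarrow> real" where
  "l n j = (if j = 0 then 0 else real ((n-1) choose (j-1)) * fact n / fact j)"

lemma l_0 [simp]: "l n 0 = 0" by (simp add: l_def)
lemma l_big: "n \<ge> 1 \<Longrightarrow> j > n \<Longrightarrow> l n j = 0" by (simp add: l_def)

lemma binom_aux: "real (Suc k) * real (p choose Suc k) = (real p - real k) * real (p choose k)"
proof (cases "k \<le> p")
  case True
  have "Suc k * (p choose Suc k) = (p - k) * (p choose k)"
    using binomial_absorption[of k p] binomial_absorb_comp[of p k] by simp
  hence "real (Suc k * (p choose Suc k)) = real ((p - k) * (p choose k))" by simp
  thus ?thesis using True by (simp only: of_nat_mult of_nat_diff)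
next
  case False
  hence z: "p choose k = 0" "p choose Suc k = 0" by auto
  show ?thesis unfolding z by simp
qed

lemma l_rec: "l (Suc (Suc p)) (Suc k) = real (Suc p + Suc k) * l (Suc p) (Suc k) + l (Suc p) k"
proof (cases k)
  case 0
  show ?thesis unfolding 0 l_def by (simp add: fact_Suc[of "Suc p"] algebra_simps del: fact_Suc)
next
  case (Suc k')
  have h: "real (Suc k') * real (p choose Suc k') = (real p - real k') * real (p choose k')"
    by (rule binom_aux)
  have f1: "fact (Suc (Suc p)) = real (Suc (Suc p)) * (fact (Suc p) :: real)" by (simp only: fact_Suc of_nat_Suc)
  have f2: "fact (Suc (Suc k')) = real (Suc (Suc k')) * (fact (Suc k') :: real)" by (simp only: fact_Suc of_nat_Suc)
  have pos: "fact (Suc p) > (0::real)" "fact (Suc k') > (0::real)" by auto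
  have key: "real (Suc p choose Suc k') * real (Suc (Suc p)) =
     real (Suc p + Suc (Suc k')) * real (p choose Suc k') + real (Suc (Suc k')) * real (p choose k')"
    using h by (simp add: algebra_simps)
  define F where "F = (fact (Suc p) :: real) / fact (Suc (Suc k'))"
  have e1: "l (Suc (Suc p)) (Suc (Suc k')) = real (Suc p choose Suc k') * real (Suc (Suc p)) * F"
    unfolding l_def F_def f1 by simp
  have e2: "l (Suc p) (Suc (Suc k')) = real (p choose Suc k') * F"
    unfolding l_def F_def by simp
  have e3: "l (Suc p) (Suc k') = real (p choose k') * real (Suc (Suc k')) * F"
    unfolding l_def F_def f2 using pos by (simp add: field_simps del: fact_Suc of_nat_Suc)
  have "real (Suc p + Suc (Suc k')) * l (Suc p) (Suc (Suc k')) + l (Suc p) (Suc k')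
     = (real (Suc p + Suc (Suc k')) * real (p choose Suc k') + real (Suc (Suc k')) * real (p choose k')) * F"
    unfolding e2 e3 by (simp only: algebra_simps)
  also have "\<dots> = l (Suc (Suc p)) (Suc (Suc k'))" unfolding e1 key[symmetric] ..
  finally show ?thesis unfolding Suc by simp
qed

lemma s_rec: "stirling1s (Suc k) (Suc M) = stirling1s k M - real k * stirling1s k (Suc M)"
proof (cases "M < k")
  case True
  have e: "k - M = Suc (k - Suc M)" using True by simp
  show ?thesis unfolding stirling1s_def diff_Suc_Suc e by (simp add: algebra_simps)
next
  case False
  hence "stirling k (Suc M) = 0" by simp
  moreover have "k - M = 0" using False by simp
  ultimately show ?thesis unfolding stirling1s_def by simp
qed

lemma s_0: "j \<ge> 1 \<Longrightarrow> stirling1s j 0 = 0" by (simp add: stirling1s_def)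
lemma s_less: "j < M \<Longrightarrow> stirling1s j M = 0" by (simp add: stirling1s_def)

lemma l_s0: "l n j * stirling1s j 0 = 0" by (cases j) (auto simp: s_0)

lemma lah: "n \<ge> 1 \<Longrightarrow> real (stirling n M) = (\<Sum>j\<le>n. l n j * stirling1s j M)"
proof (induction n arbitrary: M rule: nat_induct_at_least)
  case base
  have "l 1 1 = 1" by (simp add: l_def)
  moreover have "stirling1s 1 M = real (stirling 1 M)"
    by (cases M) (auto simp: stirling1s_def)
  ultimately show ?case by simp
next
  case (Suc n)
  show ?case
  proof (cases M)
    case 0
    have "(\<Sum>j\<le>Suc n. l (Suc n) j * stirling1s j M) = 0"
      by (rule sum.neutral) (simp add: 0 l_s0)
    thus ?thesis using 0 by simp
  next
    case (Suc M')
    obtain p where p: "n = Suc p" using Suc.hyps by (cases n) auto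
    define g where "g j = l n j * stirling1s j (Suc M')" for j
    have "(\<Sum>j\<le>Suc n. l (Suc n) j * stirling1s j M) = (\<Sum>k\<le>n. l (Suc n) (Suc k) * stirling1s (Suc k) (Suc M'))"
      by (subst sum.atMost_Suc_shift) (simp add: Suc)
    also have "\<dots> = (\<Sum>k\<le>n. real (n + Suc k) * g (Suc k)) + (\<Sum>k\<le>n. l n k * stirling1s (Suc k) (Suc M'))"
      unfolding g_def p by (simp add: l_rec sum.distrib algebra_simps)
    also have "(\<Sum>k\<le>n. real (n + Suc k) * g (Suc k)) = (\<Sum>j\<le>n. real (n + j) * g j)"
    proof -
      have "(\<Sum>j\<le>Suc n. real (n + j) * g j) = real (n+0) * g 0 + (\<Sum>k\<le>n. real (n + Suc k) * g (Suc k))"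
        by (rule sum.atMost_Suc_shift)
      moreover have "g 0 = 0" by (simp add: g_def)
      moreover have "g (Suc n) = 0" using Suc.hyps by (simp add: g_def l_big)
      ultimately show ?thesis by simp
    qed
    also have "\<dots> = real n * (\<Sum>j\<le>n. g j) + (\<Sum>j\<le>n. real j * g j)"
      by (simp add: sum.distrib sum_distrib_left algebra_simps)
    also have "(\<Sum>k\<le>n. l n k * stirling1s (Suc k) (Suc M')) = (\<Sum>k\<le>n. l n k * stirling1s k M') - (\<Sum>j\<le>n. real j * g j)"
      unfolding g_def s_rec by (simp add: sum_subtractf algebra_simps)
    finally have "(\<Sum>j\<le>Suc n. l (Suc n) j * stirling1s j M) = real n * (\<Sum>j\<le>n. g j) + (\<Sum>k\<le>n. l n k * stirling1s k M')"
      by simp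
    also have "\<dots> = real n * real (stirling n (Suc M')) + real (stirling n M')"
      using Suc.IH[of "Suc M'"] Suc.IH[of M'] unfolding g_def by simp
    also have "\<dots> = real (stirling (Suc n) M)" unfolding Suc by simp
    finally show ?thesis by simp
  qed
qed




lemma swap1: fixes N :: nat and f g :: "nat \<Rightarrow> real" shows "(\<Sum>a=1..N. g a * (\<Sum>p\<le>N-a. f p)) = (\<Sum>q\<le>N. \<Sum>a=1..q. g a * (f (q-a) :: real))"
proof (induction N)
  case 0 thus ?case by simp
next
  case (Suc N)
  have "(\<Sum>a=1..Suc N. g a * (\<Sum>p\<le>Suc N-a. f p)) = (\<Sum>a=1..N. g a * (\<Sum>p\<le>Suc N-a. f p)) + g (Suc N) * f 0"
    by (simp add: sum.cl_ivl_Suc)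
  also have "(\<Sum>a=1..N. g a * (\<Sum>p\<le>Suc N-a. f p)) = (\<Sum>a=1..N. g a * (\<Sum>p\<le>N-a. f p)) + (\<Sum>a=1..N. g a * f (Suc N - a))"
    by (subst sum.distrib[symmetric], rule sum.cong) (auto simp: Suc_diff_le algebra_simps)
  finally have "(\<Sum>a=1..Suc N. g a * (\<Sum>p\<le>Suc N-a. f p)) = (\<Sum>a=1..N. g a * (\<Sum>p\<le>N-a. f p)) + (\<Sum>a=1..Suc N. g a * f (Suc N - a))"
    by (simp add: sum.cl_ivl_Suc)
  thus ?case using Suc.IH by simp
qed

lemma swap2: fixes N :: nat and f g :: "nat \<Rightarrow> real" shows "(\<Sum>a=1..N. g a * (\<Sum>p\<le>N-a. f p)) = (\<Sum>k=1..N. (\<Sum>a=1..k. g a) * (f (N-k) :: real))"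
proof (induction N arbitrary: f)
  case 0 thus ?case by simp
next
  case (Suc N)
  have "(\<Sum>a=1..Suc N. g a * (\<Sum>p\<le>Suc N-a. f p)) = (\<Sum>a=1..N. g a * (\<Sum>p\<le>Suc N-a. f p)) + g (Suc N) * f 0"
    by (simp add: sum.cl_ivl_Suc)
  also have "(\<Sum>a=1..N. g a * (\<Sum>p\<le>Suc N-a. f p)) = (\<Sum>a=1..N. g a) * f 0 + (\<Sum>a=1..N. g a * (\<Sum>p\<le>N-a. f (Suc p)))"
  proof (subst sum_distrib_right, subst sum.distrib[symmetric], rule sum.cong[OF refl])
    fix a assume a: "a \<in> {1..N}"
    have "Suc N - a = Suc (N-a)" using a by auto
    hence "(\<Sum>p\<le>Suc N-a. f p) = f 0 + (\<Sum>p\<le>N-a. f (Suc p))"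
      by (simp only: sum.atMost_Suc_shift)
    thus "g a * (\<Sum>p\<le>Suc N-a. f p) = g a * f 0 + g a * (\<Sum>p\<le>N-a. f (Suc p))"
      by (simp add: algebra_simps)
  qed
  also have "(\<Sum>a=1..N. g a * (\<Sum>p\<le>N-a. f (Suc p))) = (\<Sum>k=1..N. (\<Sum>a=1..k. g a) * f (Suc (N-k)))"
    by (rule Suc.IH)
  also have "\<dots> = (\<Sum>k=1..N. (\<Sum>a=1..k. g a) * f (Suc N - k))"
    by (rule sum.cong) (auto simp: Suc_diff_le)
  finally show ?case by (simp add: sum.cl_ivl_Suc algebra_simps)
qed

lemma mharm_A: "mharm N m = (\<Sum>p\<le>N. fact m * A p m)"
proof (induction m arbitrary: N)
  case 0
  have "(\<Sum>p\<le>N. fact 0 * A p 0) = (\<Sum>p\<le>N. if p = 0 then 1 else 0)"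
    by (rule sum.cong) (auto simp: A_0)
  thus ?case by (simp add: mharm_0)
next
  case (Suc m)
  have "mharm N (Suc m) = (\<Sum>a=1..N. (1 / real a) * (\<Sum>p\<le>N-a. fact m * A p m))"
    unfolding mharm_Suc Suc.IH by simp
  also have "\<dots> = (\<Sum>q\<le>N. \<Sum>a=1..q. (1 / real a) * (fact m * A (q-a) m))"
    by (rule swap1)
  also have "\<dots> = (\<Sum>q\<le>N. fact m * S q m)"
    unfolding S_def by (simp add: sum_distrib_left)
  also have "\<dots> = (\<Sum>q\<le>N. fact (Suc m) * A q (Suc m))"
    unfolding conv by (simp add: algebra_simps)
  finally show ?case .
qed

lemma c_lemma:
  assumes "m \<ge> 1"
  shows "(\<Sum>j=m..N+1. real (N choose (j-1)) * stirling1s j m / fact j) = A (N+1) m"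
proof -
  define h where "h j = l (Suc N) j * stirling1s j m / fact (Suc N)" for j
  have lahS: "real (stirling (Suc N) m) = (\<Sum>j\<le>Suc N. l (Suc N) j * stirling1s j m)" by (rule lah) simp
  have "A (N+1) m = (\<Sum>j\<le>Suc N. h j)"
    unfolding A_def h_def Suc_eq_plus1[symmetric] lahS sum_divide_distrib ..
  also have "\<dots> = (\<Sum>j=m..Suc N. h j)"
    by (rule sum.mono_neutral_right) (auto simp: h_def s_less)
  also have "\<dots> = (\<Sum>j=m..N+1. real (N choose (j-1)) * stirling1s j m / fact j)"
    by (rule sum.cong) (use assms in \<open>auto simp: h_def l_def\<close>)
  finally show ?thesis by simp
qed

lemma part1:
  assumes "m \<ge> 1"
  shows "(\<Sum>k=1..n. harm k * A (n-k+1) m) = mharm (n+1) (m+1) / fact m"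
proof -
  have "mharm (n+1) (m+1) = (\<Sum>a=1..n+1. inverse (real a) * (\<Sum>p\<le>n+1-a. fact m * A p m))"
    unfolding mharm_A[of _ m, symmetric] by (simp add: mharm_Suc divide_inverse mult.commute)
  also have "\<dots> = (\<Sum>k=1..n+1. (\<Sum>a=1..k. inverse (real a)) * (fact m * A (n+1-k) m))"
    by (rule swap2)
  also have "\<dots> = (\<Sum>k=1..n+1. harm k * (fact m * A (n+1-k) m))"
    by (simp add: harm_def)
  also have "\<dots> = (\<Sum>k=1..n. harm k * (fact m * A (n+1-k) m))"
    using assms by (cases m) (auto simp: sum.cl_ivl_Suc)
  also have "\<dots> = fact m * (\<Sum>k=1..n. harm k * A (n-k+1) m)"
    by (simp add: sum_distrib_left algebra_simps Suc_diff_le)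
  finally show ?thesis by simp
qed

lemma mharm_1: "mharm N (Suc 0) = harm N"
  by (simp add: mharm_Suc mharm_0 harm_def divide_inverse)

lemma rev_harm: "(\<Sum>a=1..N. 1 / real (Suc (N-a))) = harm N"
proof -
  have "(\<Sum>a=1..N. 1 / real (Suc (N-a))) = (\<Sum>a=1..N. 1 / real (Suc (N-(N+1-a))))"
    by (subst sum.atLeastAtMost_rev) simp
  also have "\<dots> = (\<Sum>a=1..N. inverse (real a))"
    by (rule sum.cong) (auto simp: Suc_diff_le divide_inverse)
  finally show ?thesis by (simp add: harm_def)
qed

lemma D_lemma: "(\<Sum>a=1..N. harm (N-a) / real a) = (harm N)^2 - harm2 N"
proof (induction N)
  case 0 thus ?case by (simp add: harm_def harm2_def)
next
  case (Suc N)
  have "(\<Sum>a=1..Suc N. harm (Suc N-a) / real a) = (\<Sum>a=1..N. harm (Suc (N-a)) / real a)"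
    by (simp add: sum.cl_ivl_Suc Suc_diff_le harm_def)
  also have "\<dots> = (\<Sum>a=1..N. harm (N-a) / real a) + (\<Sum>a=1..N. (1 / real a + 1 / real (Suc (N-a))) / real (Suc N))"
  proof (subst sum.distrib[symmetric], rule sum.cong[OF refl])
    fix a assume a: "a \<in> {1..N}"
    have e: "real (Suc N) = real (Suc (N-a)) + real a" using a by auto
    have p: "real a > 0" using a by auto
    have q: "real (Suc (N-a)) > 0" by simp
    show "harm (Suc (N-a)) / real a = harm (N-a) / real a + (1 / real a + 1 / real (Suc (N-a))) / real (Suc N)"
    proof -
      define x where "x = real (Suc (N-a))"
      have xp: "x > 0" "x + real a > 0" using p q unfolding x_def by auto
      have "1 / real a + 1 / x = (x + real a) / (x * real a)"
        using p xp by (simp add: field_simps)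
      hence id: "(1 / real a + 1 / x) / (x + real a) = 1 / (x * real a)"
        using xp by simp
      have "harm (Suc (N-a)) = harm (N-a) + 1 / x" unfolding x_def harm_Suc by (simp add: divide_inverse)
      hence "harm (Suc (N-a)) / real a = harm (N-a) / real a + 1 / (x * real a)"
        by (simp add: add_divide_distrib)
      thus ?thesis unfolding e x_def[symmetric] id by simp
    qed
  qed
  also have "(\<Sum>a=1..N. (1 / real a + 1 / real (Suc (N-a))) / real (Suc N)) = 2 * harm N / real (Suc N)"
    unfolding sum_divide_distrib[symmetric] sum.distrib rev_harm by (simp add: harm_def divide_inverse)
  finally have eq: "(\<Sum>a=1..Suc N. harm (Suc N-a) / real a) = (\<Sum>a=1..N. harm (N-a) / real a) + 2 * harm N / real (Suc N)" .
  define x where "x = real (Suc N)"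
  have xp: "x > 0" unfolding x_def by simp
  have h1: "harm (Suc N) = harm N + 1 / x" unfolding x_def harm_Suc by (simp add: divide_inverse)
  have h2: "harm2 (Suc N) = harm2 N + 1 / x^2" unfolding x_def harm2_def by (simp add: sum.cl_ivl_Suc)
  show ?case unfolding eq Suc.IH h1 h2 x_def[symmetric] using xp
    by (simp add: power2_eq_square field_simps)
qed

theorem theorem7:
  fixes m n :: nat
  assumes "m \<ge> 1" and "n \<ge> 1"
  shows "((\<Sum>k=1..n. (harm k :: real) *
            (\<Sum>j=m..n-k+1. real ((n-k) choose (j-1)) * stirling1s j m / fact j))
         = mharm (n+1) (m+1) / fact m) \<and>
         ((\<Sum>k=1..n. (harm k :: real) / real (n-k+1))
         = (harm (n+1))^2 - harm2 (n+1))"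
proof
  have gen: "(\<Sum>k=1..n. (harm k :: real) *
            (\<Sum>j=m'..n-k+1. real ((n-k) choose (j-1)) * stirling1s j m' / fact j))
         = mharm (n+1) (m'+1) / fact m'" if "m' \<ge> 1" for m'
    unfolding c_lemma[OF that] by (rule part1[OF that])
  show "(\<Sum>k=1..n. (harm k :: real) *
            (\<Sum>j=m..n-k+1. real ((n-k) choose (j-1)) * stirling1s j m / fact j))
         = mharm (n+1) (m+1) / fact m" by (rule gen[OF assms(1)])
  have "(\<Sum>k=1..n. (harm k :: real) / real (n-k+1)) = (\<Sum>k=1..n. harm k * A (n-k+1) 1)"
  proof (rule sum.cong[OF refl])
    fix k assume k: "k \<in> {1..n}"
    have "A (n-k+1) 1 = 1 / real (n-k+1)" by (rule A_1) simp
    thus "harm k / real (n-k+1) = harm k * A (n-k+1) 1" by simp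
  qed
  also have "\<dots> = mharm (n+1) 2"
    using part1[of 1 n] by (simp add: numeral_2_eq_2)
  also have "\<dots> = (\<Sum>a=1..n+1. harm (n+1-a) / real a)"
    by (simp only: numeral_2_eq_2 mharm_Suc[of _ "Suc 0"] mharm_1)
  also have "\<dots> = (harm (n+1))^2 - harm2 (n+1)" by (rule D_lemma)
  finally show "(\<Sum>k=1..n. (harm k :: real) / real (n-k+1)) = (harm (n+1))^2 - harm2 (n+1)" .
qed


end
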